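(* Let $G(\mathcal V,\mathcal E)$ be a finite simple directed graph with $n=|\mathcal V|\ge 2$ nodes and let $f\ge 0$ be an integer. Suppose that a correct Byzantine consensus algorithm tolerating up to $f$ Byzantine faulty nodes exists for $G(\mathcal V,\mathcal E)$. Then for every partition $L,C,R,F$ of $\mathcal V$ (some of $C,F$ possibly empty) such that $L$ and $R$ are both non-empty and $|F|\le f$, either $L\cup C\rightarrow R$ or $R\cup C\rightarrow L$.
   Context: Network model: $G(\mathcal V,\mathcal E)$ is a simple directed graph without self-loops; node $i$ can send messages directly to node $j$ if and only if $(i,j)\in\mathcal E$. The system is synchronous, links are reliable, FIFO and deliver each message exactly once within bounded time; the topology is known to all nodes. Each node has an input in $\{0,1\}$. Up to $f$ nodes may be Byzantine faulty: they may deviate arbitrarily from the algorithm, may collude, and know the whole execution state, the algorithm and the topology. An algorithm is a correct Byzantine consensus algorithm if, for every set of at most $f$ faulty nodes, every behavior of the faulty nodes and all inputs: (Agreement) all fault-free nodes output the same value; (Validity) the output of every fault-free node equals the input of some fault-free node; (Termination) every fault-free node eventually decides on an output. Notation: for disjoint sets $X,Y\subseteq\mathcal V$ with $Y$ non-empty, $X\rightarrow Y$ means $|\{i\in X : (i,j)\in\mathcal E \text{ for some } j\in Y\}|>f$, i.e. $X$ contains at least $f+1$ distinct incoming neighbors of $Y$; $X\not\rightarrow Y$ means this fails. Sets are considered disjoint if either is empty. *)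

theory Defs
  imports Main
begin

text \<open>In every round each node sends one message (of arbitrary type) to each node;
  it is delivered only along edges.\<close>

record ('v, 's, 'm) byz_alg =
  alg_init  :: "'v \<Rightarrow> bool \<Rightarrow> 's"
  alg_send  :: "'v \<Rightarrow> 's \<Rightarrow> 'v \<Rightarrow> 'm"
  alg_trans :: "'v \<Rightarrow> 's \<Rightarrow> ('v \<Rightarrow> 'm option) \<Rightarrow> 's"
  alg_out   :: "'v \<Rightarrow> 's \<Rightarrow> bool option"

text \<open>States after r rounds, with inputs x, faulty set F and Byzantine behaviour byz
  (byz r i j = message faulty node i sends to j in round r).\<close>
primrec exec_state ::
  "('v, 's, 'm) byz_alg \<Rightarrow> ('v \<times> 'v) set \<Rightarrow> ('v \<Rightarrow> bool) \<Rightarrow> 'v set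
     \<Rightarrow> (nat \<Rightarrow> 'v \<Rightarrow> 'v \<Rightarrow> 'm) \<Rightarrow> nat \<Rightarrow> 'v \<Rightarrow> 's" where
  "exec_state A E x F byz 0 = (\<lambda>i. alg_init A i (x i))"
| "exec_state A E x F byz (Suc r) =
     (\<lambda>i. alg_trans A i (exec_state A E x F byz r i)
            (\<lambda>k. if (k, i) \<in> E
                 then Some (if k \<in> F then byz r k i
                            else alg_send A k (exec_state A E x F byz r k) i)
                 else None))"

definition decides ::
  "('v, 's, 'm) byz_alg \<Rightarrow> ('v \<times> 'v) set \<Rightarrow> ('v \<Rightarrow> bool) \<Rightarrow> 'v set
     \<Rightarrow> (nat \<Rightarrow> 'v \<Rightarrow> 'v \<Rightarrow> 'm) \<Rightarrow> 'v \<Rightarrow> bool" where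
  "decides A E x F byz i \<longleftrightarrow> (\<exists>r. alg_out A i (exec_state A E x F byz r i) \<noteq> None)"

definition decision ::
  "('v, 's, 'm) byz_alg \<Rightarrow> ('v \<times> 'v) set \<Rightarrow> ('v \<Rightarrow> bool) \<Rightarrow> 'v set
     \<Rightarrow> (nat \<Rightarrow> 'v \<Rightarrow> 'v \<Rightarrow> 'm) \<Rightarrow> 'v \<Rightarrow> bool" where
  "decision A E x F byz i =
     the (alg_out A i (exec_state A E x F byz
            (LEAST r. alg_out A i (exec_state A E x F byz r i) \<noteq> None) i))"

definition correct_byz_consensus ::
  "'v set \<Rightarrow> ('v \<times> 'v) set \<Rightarrow> nat \<Rightarrow> ('v, 's, 'm) byz_alg \<Rightarrow> bool" where
  "correct_byz_consensus V E f A \<longleftrightarrow>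
     (\<forall>F x byz. F \<subseteq> V \<and> card F \<le> f \<longrightarrow>
        (\<forall>i\<in>V - F. decides A E x F byz i) \<and>
        (\<forall>i\<in>V - F. \<forall>j\<in>V - F. decision A E x F byz i = decision A E x F byz j) \<and>
        (\<forall>i\<in>V - F. \<exists>k\<in>V - F. decision A E x F byz i = x k))"

text \<open>X \<rightarrow> Y: X contains at least f+1 distinct incoming neighbours of Y.\<close>
definition reaches :: "('v \<times> 'v) set \<Rightarrow> nat \<Rightarrow> 'v set \<Rightarrow> 'v set \<Rightarrow> bool" where
  "reaches E f X Y \<longleftrightarrow> card {i \<in> X. \<exists>j\<in>Y. (i, j) \<in> E} > f"

definition simple_digraph :: "'v set \<Rightarrow> ('v \<times> 'v) set \<Rightarrow> bool" where
  "simple_digraph V E \<longleftrightarrow> finite V \<and> E \<subseteq> V \<times> V \<and> (\<forall>i. (i, i) \<notin> E)"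

end

theory Submission
  imports Defs
begin

definition bg :: "('v, 's, 'm) byz_alg \<Rightarrow> 'v set \<Rightarrow> 'v set \<Rightarrow> ('v \<Rightarrow> 's) \<times> ('v \<Rightarrow> 's) \<times> ('v \<Rightarrow> 's) \<Rightarrow> 'v \<Rightarrow> 'v \<Rightarrow> 'm" where
  "bg Al L R p k i = (if i \<in> L then alg_send Al k (fst (snd p) k) i
     else if i \<in> R then alg_send Al k (snd (snd p) k) i else alg_send Al k (fst p k) i)"

definition bo :: "('v, 's, 'm) byz_alg \<Rightarrow> ('v \<Rightarrow> 's) \<times> ('v \<Rightarrow> 's) \<times> ('v \<Rightarrow> 's) \<Rightarrow> 'v \<Rightarrow> 'v \<Rightarrow> 'm" where
  "bo Al p k i = alg_send Al k (fst p k) i"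

definition stp :: "('v, 's, 'm) byz_alg \<Rightarrow> ('v \<times> 'v) set \<Rightarrow> 'v set \<Rightarrow> ('v \<Rightarrow> 'v \<Rightarrow> 'm) \<Rightarrow> ('v \<Rightarrow> 's) \<Rightarrow> 'v \<Rightarrow> 's" where
  "stp Al E F byzf st = (\<lambda>i. alg_trans Al i (st i) (\<lambda>k. if (k, i) \<in> E then Some (if k \<in> F then byzf k i else alg_send Al k (st k) i) else None))"

primrec jst :: "('v, 's, 'm) byz_alg \<Rightarrow> ('v \<times> 'v) set \<Rightarrow> 'v set \<Rightarrow> 'v set \<Rightarrow> 'v set \<Rightarrow> 'v set \<Rightarrow> 'v set \<Rightarrow> nat \<Rightarrow> ('v \<Rightarrow> 's) \<times> ('v \<Rightarrow> 's) \<times> ('v \<Rightarrow> 's)" where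
  "jst Al E F L R NA NB 0 = ((\<lambda>i. alg_init Al i (i \<in> R)), (\<lambda>i. alg_init Al i False), (\<lambda>i. alg_init Al i True))"
| "jst Al E F L R NA NB (Suc r) = (let p = jst Al E F L R NA NB r in
     (stp Al E F (bg Al L R p) (fst p), stp Al E NA (bo Al p) (fst (snd p)), stp Al E NB (bo Al p) (snd (snd p))))"

lemma exG: "exec_state Al E (\<lambda>i. i \<in> R) F (\<lambda>r. bg Al L R (jst Al E F L R NA NB r)) r = fst (jst Al E F L R NA NB r)"
  proof (induction r) case (Suc r) show ?case unfolding exec_state.simps Suc.IH by (simp add: stp_def Let_def) qed simp

lemma exL: "exec_state Al E (\<lambda>i. False) NA (\<lambda>r. bo Al (jst Al E F L R NA NB r)) r = fst (snd (jst Al E F L R NA NB r))"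
  proof (induction r) case (Suc r) show ?case unfolding exec_state.simps Suc.IH by (simp add: stp_def Let_def) qed simp

lemma exR: "exec_state Al E (\<lambda>i. True) NB (\<lambda>r. bo Al (jst Al E F L R NA NB r)) r = snd (snd (jst Al E F L R NA NB r))"
  proof (induction r) case (Suc r) show ?case unfolding exec_state.simps Suc.IH by (simp add: stp_def Let_def) qed simp

lemma eqL:
  assumes "\<And>k i. (k, i) \<in> E \<Longrightarrow> i \<in> L \<Longrightarrow> k \<in> L \<or> k \<in> F \<or> k \<in> NA"
    and "L \<inter> F = {}" and "L \<inter> NA = {}" and "F \<inter> NA = {}" and "L \<inter> R = {}"
  shows "\<forall>i\<in>L. fst (jst Al E F L R NA NB r) i = fst (snd (jst Al E F L R NA NB r)) i"
proof (induction r)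
  case 0 then show ?case using assms(5) by (auto simp: disjoint_iff)
next
  case (Suc r)
  show ?case
  proof
    fix i assume i: "i \<in> L"
    let ?p = "jst Al E F L R NA NB r"
    have "(\<lambda>k. if (k, i) \<in> E then Some (if k \<in> F then bg Al L R ?p k i else alg_send Al k (fst ?p k) i) else None)
        = (\<lambda>k. if (k, i) \<in> E then Some (if k \<in> NA then bo Al ?p k i else alg_send Al k (fst (snd ?p) k) i) else None)"
    proof
      fix k show "(if (k, i) \<in> E then Some (if k \<in> F then bg Al L R ?p k i else alg_send Al k (fst ?p k) i) else None)
        = (if (k, i) \<in> E then Some (if k \<in> NA then bo Al ?p k i else alg_send Al k (fst (snd ?p) k) i) else None)"
      proof (cases "(k, i) \<in> E")
        case True
        then have "k \<in> L \<or> k \<in> F \<or> k \<in> NA" using assms(1) i by blast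
        then show ?thesis using True i Suc assms(2-4) by (auto simp: bg_def bo_def)
      qed simp
    qed
    then show "fst (jst Al E F L R NA NB (Suc r)) i = fst (snd (jst Al E F L R NA NB (Suc r))) i"
      using Suc i by (simp add: stp_def Let_def)
  qed
qed

lemma eqR:
  assumes "\<And>k i. (k, i) \<in> E \<Longrightarrow> i \<in> R \<Longrightarrow> k \<in> R \<or> k \<in> F \<or> k \<in> NB"
    and "R \<inter> F = {}" and "R \<inter> NB = {}" and "F \<inter> NB = {}" and "L \<inter> R = {}"
  shows "\<forall>i\<in>R. fst (jst Al E F L R NA NB r) i = snd (snd (jst Al E F L R NA NB r)) i"
proof (induction r)
  case 0 then show ?case using assms(5) by (auto simp: disjoint_iff)
next
  case (Suc r)
  show ?case
  proof
    fix i assume i: "i \<in> R"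
    let ?p = "jst Al E F L R NA NB r"
    have "(\<lambda>k. if (k, i) \<in> E then Some (if k \<in> F then bg Al L R ?p k i else alg_send Al k (fst ?p k) i) else None)
        = (\<lambda>k. if (k, i) \<in> E then Some (if k \<in> NB then bo Al ?p k i else alg_send Al k (snd (snd ?p) k) i) else None)"
    proof
      fix k show "(if (k, i) \<in> E then Some (if k \<in> F then bg Al L R ?p k i else alg_send Al k (fst ?p k) i) else None)
        = (if (k, i) \<in> E then Some (if k \<in> NB then bo Al ?p k i else alg_send Al k (snd (snd ?p) k) i) else None)"
      proof (cases "(k, i) \<in> E")
        case True
        then have "k \<in> R \<or> k \<in> F \<or> k \<in> NB" using assms(1) i by blast
        then show ?thesis using True i Suc assms(2-5) by (auto simp: bg_def bo_def)
      qed simp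
    qed
    then show "fst (jst Al E F L R NA NB (Suc r)) i = snd (snd (jst Al E F L R NA NB (Suc r))) i"
      using Suc i by (simp add: stp_def Let_def)
  qed
qed

theorem theorem3:
  fixes V :: "'v set" and E :: "('v \<times> 'v) set" and f :: nat
    and A :: "('v, 's, 'm) byz_alg"
    and L C R F :: "'v set"
  assumes "simple_digraph V E"
    and "card V \<ge> 2"
    and "correct_byz_consensus V E f A"
    and "L \<union> C \<union> R \<union> F = V"
    and "L \<inter> C = {}" and "L \<inter> R = {}" and "L \<inter> F = {}"
    and "C \<inter> R = {}" and "C \<inter> F = {}" and "R \<inter> F = {}"
    and "L \<noteq> {}" and "R \<noteq> {}"
    and "card F \<le> f"
  shows "reaches E f (L \<union> C) R \<or> reaches E f (R \<union> C) L"
proof (rule ccontr)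
  assume "\<not> ?thesis"
  then have nA: "card {i \<in> R \<union> C. \<exists>j\<in>L. (i, j) \<in> E} \<le> f"
    and nB: "card {i \<in> L \<union> C. \<exists>j\<in>R. (i, j) \<in> E} \<le> f"
    by (auto simp: reaches_def)
  define NA where "NA = {i \<in> R \<union> C. \<exists>j\<in>L. (i, j) \<in> E}"
  define NB where "NB = {i \<in> L \<union> C. \<exists>j\<in>R. (i, j) \<in> E}"
  have EV: "E \<subseteq> V \<times> V" using assms(1) by (simp add: simple_digraph_def)
  let ?J = "jst A E F L R NA NB"
  have cL: "\<forall>i\<in>L. fst (?J r) i = fst (snd (?J r)) i" for r
  proof (rule eqL)
    fix k i assume "(k, i) \<in> E" "i \<in> L"
    moreover have "k \<in> V" using EV \<open>(k, i) \<in> E\<close> by blast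
    ultimately show "k \<in> L \<or> k \<in> F \<or> k \<in> NA" using assms(4) unfolding NA_def by blast
  qed (use assms in \<open>auto simp: NA_def\<close>)
  have cR: "\<forall>i\<in>R. fst (?J r) i = snd (snd (?J r)) i" for r
  proof (rule eqR)
    fix k i assume "(k, i) \<in> E" "i \<in> R"
    moreover have "k \<in> V" using EV \<open>(k, i) \<in> E\<close> by blast
    ultimately show "k \<in> R \<or> k \<in> F \<or> k \<in> NB" using assms(4) unfolding NB_def by blast
  qed (use assms in \<open>auto simp: NB_def\<close>)
  obtain l where l: "l \<in> L" using assms(11) by blast
  obtain q where q: "q \<in> R" using assms(12) by blast
  have cons: "\<And>F x byz. F \<subseteq> V \<Longrightarrow> card F \<le> f \<Longrightarrow>
        (\<forall>i\<in>V - F. \<forall>j\<in>V - F. decision A E x F byz i = decision A E x F byz j) \<and>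
        (\<forall>i\<in>V - F. \<exists>k\<in>V - F. decision A E x F byz i = x k)"
    using assms(3) unfolding correct_byz_consensus_def by blast
  have NAV: "NA \<subseteq> V" "NB \<subseteq> V" using assms(4) by (auto simp: NA_def NB_def)
  have lV: "l \<in> V - NA" using l assms(4,5,6) by (auto simp: NA_def)
  have qV: "q \<in> V - NB" using q assms(4,6,8) by (auto simp: NB_def)
  have d1: "decision A E (\<lambda>i. False) NA (\<lambda>r. bo A (?J r)) l = False"
    using cons[OF NAV(1) nA[folded NA_def], of "\<lambda>i. False" "\<lambda>r. bo A (?J r)"] lV by blast
  have d2: "decision A E (\<lambda>i. True) NB (\<lambda>r. bo A (?J r)) q = True"
    using cons[OF NAV(2) nB[folded NB_def], of "\<lambda>i. True" "\<lambda>r. bo A (?J r)"] qV by blast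
  have g1: "decision A E (\<lambda>i. i \<in> R) F (\<lambda>r. bg A L R (?J r)) l = False"
    using d1 cL l unfolding decision_def exG exL by simp
  have g2: "decision A E (\<lambda>i. i \<in> R) F (\<lambda>r. bg A L R (?J r)) q = True"
    using d2 cR q unfolding decision_def exG exR by simp
  have FV: "F \<subseteq> V" using assms(4) by blast
  have "l \<in> V - F" "q \<in> V - F" using l q assms(4,7,10) by auto
  then show False
    using cons[OF FV assms(13), of "\<lambda>i. i \<in> R" "\<lambda>r. bg A L R (?J r)"] g1 g2 by metis
qed

end
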